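(* Let $N\ge1$, $v>0$, $\varepsilon>0$, $L_1>0$ and $L_2=1$. Consider the continuous-time Markov chain $(N(t),W(t))$ on $\{0,\dots,N\}\times\{A,I\}$ with transition rates $(k,A)\to(k+1,A)$ at rate $(N-k)v$, $(k,A)\to(k-1,A)$ at rate $k$, $(k,I)\to(k+1,I)$ at rate $\varepsilon(N-k)v$, $(k,I)\to(k-1,I)$ at rate $k$, $(k,I)\to(k,A)$ at rate $L_2$, and $(k,A)\to(k,I)$ at rate $L_1\varepsilon^k$. Then the stationary marginal distribution of $N(t)$ is $$\bar\pi(k)=\frac{\binom Nk(\frac{v}{1+v})^k(\frac{1}{1+v})^{N-k}}{1+(\frac{1+\varepsilon v}{1+v})^NL_1}+\frac{\binom Nk(\frac{\varepsilon v}{1+\varepsilon v})^k(\frac{1}{1+\varepsilon v})^{N-k}}{1+(\frac{1+v}{1+\varepsilon v})^NL_1^{-1}},\qquad k=0,\dots,N,$$ a mixture of the binomial distributions $\mathcal B(N,\frac{v}{1+v})$ and $\mathcal B(N,\frac{\varepsilon v}{1+\varepsilon v})$.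
   Context: This is a model of allosteric multisite phosphorylation: $N(t)$ is the number of phosphorylated sites among $N$, $W(t)\in\{A,I\}$ is the active/inactive state of the protein, $v$ is the kinase/ligand concentration. *)

theory Defs
  imports Complex_Main
begin

text \<open>States are pairs (k, w) with k in {0..N} the number of phosphorylated sites and
  w = True for the active state A, w = False for the inactive state I.\<close>

definition states :: "nat \<Rightarrow> (nat \<times> bool) set" where
  "states N = {0..N} \<times> UNIV"

definition rate :: "nat \<Rightarrow> real \<Rightarrow> real \<Rightarrow> real \<Rightarrow> nat \<times> bool \<Rightarrow> nat \<times> bool \<Rightarrow> real" where
  "rate N v eps L1 s t =
     (let (k, a) = s; (j, b) = t in
      if a = b then
        (if j = k + 1 then (if a then real (N - k) * v else eps * real (N - k) * v)
         else if j + 1 = k then real k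
         else 0)
      else if j = k then (if a then L1 * eps ^ k else 1)
      else 0)"

definition stationary :: "nat \<Rightarrow> real \<Rightarrow> real \<Rightarrow> real \<Rightarrow> (nat \<times> bool \<Rightarrow> real) \<Rightarrow> bool" where
  "stationary N v eps L1 p \<longleftrightarrow>
     (\<forall>s\<in>states N. p s \<ge> 0) \<and>
     (\<Sum>s\<in>states N. p s) = 1 \<and>
     (\<forall>s\<in>states N.
        (\<Sum>t\<in>states N - {s}. p t * rate N v eps L1 t s) =
        p s * (\<Sum>t\<in>states N - {s}. rate N v eps L1 s t))"

definition pi_bar :: "nat \<Rightarrow> real \<Rightarrow> real \<Rightarrow> real \<Rightarrow> nat \<Rightarrow> real" where
  "pi_bar N v eps L1 k =
     real (N choose k) * (v / (1 + v)) ^ k * (1 / (1 + v)) ^ (N - k)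
       / (1 + ((1 + eps * v) / (1 + v)) ^ N * L1)
   + real (N choose k) * (eps * v / (1 + eps * v)) ^ k * (1 / (1 + eps * v)) ^ (N - k)
       / (1 + ((1 + v) / (1 + eps * v)) ^ N * inverse L1)"

end

theory Submission
  imports Defs
begin

definition wt :: "nat \<Rightarrow> real \<Rightarrow> real \<Rightarrow> real \<Rightarrow> nat \<times> bool \<Rightarrow> real" where
  "wt N v eps L1 s = (let (k, a) = s in real (N choose k) * (if a then v ^ k else L1 * (eps * v) ^ k))"

lemma binom_id: "real (N choose Suc j) * real (Suc j) = real (N choose j) * real (N - j)"
proof -
  have "Suc j * (N choose Suc j) = (N - j) * (N choose j)"
    using binomial_absorption[of j N] binomial_absorb_comp[of N j] by simp
  then have "real (Suc j * (N choose Suc j)) = real ((N - j) * (N choose j))" by simp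
  then show ?thesis by (simp only: of_nat_mult) (simp add: mult.commute)
qed

lemma rev: "wt N v eps L1 t * rate N v eps L1 t s = wt N v eps L1 s * rate N v eps L1 s t"
proof -
  obtain j b where t: "t = (j, b)" by (cases t)
  obtain k a where s: "s = (k, a)" by (cases s)
  have b1: "real (N choose Suc j) * real (Suc j) = real (N choose j) * real (N - j)" by (rule binom_id)
  have b2: "real (N choose Suc k) * real (Suc k) = real (N choose k) * real (N - k)" by (rule binom_id)
  show ?thesis
  proof (cases "a = b")
    case True
    show ?thesis
    proof (cases "k = j + 1")
      case True
      then show ?thesis using \<open>a = b\<close> b1 unfolding t s wt_def rate_def
        by (auto simp: power_Suc)
    next
      case False
      then show ?thesis
      proof (cases "j = k + 1")
        case True
        then show ?thesis using \<open>a = b\<close> b2 unfolding t s wt_def rate_def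
          by (auto simp: power_Suc)
      qed (use \<open>a = b\<close> in \<open>auto simp: t s wt_def rate_def\<close>)
    qed
  next
    case False
    then show ?thesis unfolding t s wt_def rate_def by (auto simp: power_mult_distrib)
  qed
qed

lemma rate_nonneg: "v > 0 \<Longrightarrow> eps > 0 \<Longrightarrow> L1 > 0 \<Longrightarrow> rate N v eps L1 s t \<ge> 0"
  unfolding rate_def by (auto split: prod.splits)

lemma wt_pos: "v > 0 \<Longrightarrow> eps > 0 \<Longrightarrow> L1 > 0 \<Longrightarrow> s \<in> states N \<Longrightarrow> wt N v eps L1 s > 0"
  unfolding wt_def states_def by (auto split: prod.splits)

lemma states_fin: "finite (states N)"
  unfolding states_def by simp

lemma Zsum: "(\<Sum>s\<in>states N. wt N v eps L1 s) = (1 + v) ^ N + L1 * (1 + eps * v) ^ N"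
proof -
  have "(\<Sum>s\<in>states N. wt N v eps L1 s) = (\<Sum>k\<in>{0..N}. \<Sum>a\<in>UNIV. wt N v eps L1 (k, a))"
    unfolding states_def by (simp add: sum.cartesian_product)
  also have "\<dots> = (\<Sum>k\<in>{0..N}. real (N choose k) * v ^ k + L1 * (real (N choose k) * (eps * v) ^ k))"
    by (simp add: UNIV_bool wt_def algebra_simps)
  also have "\<dots> = (1 + v) ^ N + L1 * (1 + eps * v) ^ N"
  proof -
    have "(v + 1) ^ N = (\<Sum>k\<le>N. real (N choose k) * v ^ k)"
      by (simp add: binomial_ring[of v 1 N])
    moreover have "(eps * v + 1) ^ N = (\<Sum>k\<le>N. real (N choose k) * (eps * v) ^ k)"
      by (simp add: binomial_ring[of "eps * v" 1 N])
    ultimately show ?thesis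
      by (simp add: sum.distrib sum_distrib_left[symmetric] atLeast0AtMost add.commute)
  qed
  finally show ?thesis .
qed

lemma bal_wt: "(\<Sum>t\<in>states N - {s}. wt N v eps L1 t * rate N v eps L1 t s) =
   wt N v eps L1 s * (\<Sum>t\<in>states N - {s}. rate N v eps L1 s t)"
  by (simp add: sum_distrib_left) (rule sum.cong, simp_all add: rev)

lemma marg:
  assumes "k \<le> N" "v > 0" "eps > 0" "L1 > 0"
  shows "(wt N v eps L1 (k, True) + wt N v eps L1 (k, False)) / ((1 + v) ^ N + L1 * (1 + eps * v) ^ N)
     = pi_bar N v eps L1 k"
proof -
  define A where "A = (1 + v) ^ N"
  define B where "B = (1 + eps * v) ^ N"
  have A: "A > 0" using assms by (auto simp: A_def)
  have "1 + eps * v > 0" using assms by (simp add: add_pos_pos)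
  then have B: "B > 0" by (simp add: B_def)
  have e1: "(v / (1 + v)) ^ k * (1 / (1 + v)) ^ (N - k) = v ^ k / A"
    using assms by (simp add: A_def power_divide power_add[symmetric])
  have e2: "(eps * v / (1 + eps * v)) ^ k * (1 / (1 + eps * v)) ^ (N - k) = (eps * v) ^ k / B"
    using assms by (simp add: B_def power_divide power_add[symmetric])
  have e3: "((1 + eps * v) / (1 + v)) ^ N = B / A" by (simp add: A_def B_def power_divide)
  have e4: "((1 + v) / (1 + eps * v)) ^ N = A / B" by (simp add: A_def B_def power_divide)
  have "pi_bar N v eps L1 k = real (N choose k) * (v ^ k / A) / (1 + B / A * L1)
        + real (N choose k) * ((eps * v) ^ k / B) / (1 + A / B * inverse L1)"
    unfolding pi_bar_def e3 e4 by (simp only: mult.assoc e1 e2)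
  also have "\<dots> = (real (N choose k) * v ^ k + real (N choose k) * (L1 * (eps * v) ^ k)) / (A + L1 * B)"
    using A B assms by (simp add: field_simps) (simp add: add_divide_distrib)
  finally show ?thesis by (simp add: wt_def A_def B_def)
qed

lemma propagate:
  assumes st: "stationary N v eps L1 p" and pos: "v > 0" "eps > 0" "L1 > 0"
    and s: "s \<in> states N" and t: "t \<in> states N" "t \<noteq> s" and r: "rate N v eps L1 s t > 0"
    and hmax: "\<forall>u\<in>states N. p u / wt N v eps L1 u \<le> M"
    and hs: "p s / wt N v eps L1 s = M"
  shows "p t / wt N v eps L1 t = M"
proof -
  let ?w = "wt N v eps L1" and ?r = "rate N v eps L1" and ?S = "states N - {s}"
  have wpos: "\<And>u. u \<in> states N \<Longrightarrow> ?w u > 0" using wt_pos pos by blast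
  have bal: "(\<Sum>u\<in>?S. p u * ?r u s) = p s * (\<Sum>u\<in>?S. ?r s u)"
    using st s unfolding stationary_def by blast
  have "(\<Sum>u\<in>?S. p u * ?r u s) = (\<Sum>u\<in>?S. (p u / ?w u) * (?w s * ?r s u))"
  proof (rule sum.cong)
    fix u assume u: "u \<in> ?S"
    then have "?w u > 0" using wpos by blast
    then have "p u * ?r u s = (p u / ?w u) * (?w u * ?r u s)" by simp
    then show "p u * ?r u s = (p u / ?w u) * (?w s * ?r s u)" by (simp only: rev[of N v eps L1 u s])
  qed simp
  moreover have "p s * (\<Sum>u\<in>?S. ?r s u) = (\<Sum>u\<in>?S. M * (?w s * ?r s u))"
  proof -
    have "p s = M * ?w s" using hs wpos[OF s] by (auto simp: divide_eq_eq)
    then show ?thesis by (simp add: sum_distrib_left mult.assoc)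
  qed
  ultimately have "(\<Sum>u\<in>?S. M * (?w s * ?r s u)) - (\<Sum>u\<in>?S. (p u / ?w u) * (?w s * ?r s u)) = 0"
    using bal by simp
  then have z: "(\<Sum>u\<in>?S. (M - p u / ?w u) * (?w s * ?r s u)) = 0"
    by (simp only: sum_subtractf[symmetric] left_diff_distrib)
  have nn: "\<forall>u\<in>?S. (M - p u / ?w u) * (?w s * ?r s u) \<ge> 0"
  proof
    fix u assume u: "u \<in> ?S"
    have a: "M - p u / ?w u \<ge> 0" using hmax u by auto
    have b: "?w s * ?r s u \<ge> 0" using wpos[OF s] rate_nonneg[OF pos, of N s u] by simp
    show "(M - p u / ?w u) * (?w s * ?r s u) \<ge> 0" using a b by (rule mult_nonneg_nonneg)
  qed
  have "(M - p t / ?w t) * (?w s * ?r s t) = 0"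
  proof -
    have "\<forall>u\<in>?S. (M - p u / ?w u) * (?w s * ?r s u) = 0"
      using z nn sum_nonneg_eq_0_iff[of ?S "\<lambda>u. (M - p u / ?w u) * (?w s * ?r s u)"] states_fin[of N]
      by simp
    then show ?thesis using t by simp
  qed
  moreover have "?w s * ?r s t > 0" using wpos[OF s] r by simp
  ultimately show ?thesis by (metis mult_eq_0_iff less_irrefl eq_iff_diff_eq_0)
qed

lemma connect:
  assumes cl: "\<And>k a. k \<le> N \<Longrightarrow> P (k, a) \<Longrightarrow> (k < N \<longrightarrow> P (k + 1, a)) \<and> (0 < k \<longrightarrow> P (k - 1, a)) \<and> P (k, \<not> a)"
    and s0: "P (kk, aa)" "kk \<le> N"
  shows "\<forall>s\<in>states N. P s"
proof -
  have down: "P (kk - d, aa)" for d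
  proof (induction d)
    case 0 show ?case using s0(1) by simp
  next
    case (Suc d)
    show ?case
    proof (cases "kk - d = 0")
      case True
      then have "kk - Suc d = kk - d" by simp
      then show ?thesis using Suc.IH by simp
    next
      case False
      have le: "kk - d \<le> N" using s0(2) by simp
      have "0 < kk - d \<longrightarrow> P (kk - d - 1, aa)" using cl[OF le Suc.IH] by blast
      then have "P (kk - d - 1, aa)" using False by simp
      moreover have "kk - d - 1 = kk - Suc d" by simp
      ultimately show ?thesis by simp
    qed
  qed
  have p0: "P (0, aa)" using down[of kk] by simp
  have up: "j \<le> N \<Longrightarrow> P (j, aa)" for j
  proof (induction j)
    case 0 show ?case using p0 .
  next
    case (Suc j)
    then have jl: "j < N" and jle: "j \<le> N" by simp_all
    have "j < N \<longrightarrow> P (j + 1, aa)" using cl[OF jle Suc.IH[OF jle]] by blast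
    then show ?case using jl by simp
  qed
  have all: "P (j, a)" if "j \<le> N" for j a
  proof (cases "a = aa")
    case True then show ?thesis using up[OF that] by simp
  next
    case False
    then have "a = (\<not> aa)" by blast
    moreover have "P (j, \<not> aa)" using cl[OF that up[OF that]] by blast
    ultimately show ?thesis by simp
  qed
  show ?thesis
  proof
    fix s assume "s \<in> states N"
    then obtain j a where "s = (j, a)" "j \<le> N" unfolding states_def by auto
    then show "P s" using all by simp
  qed
qed

theorem proposition1:
  fixes N :: nat and v eps L1 :: real
  assumes "N \<ge> 1" and "v > 0" and "eps > 0" and "L1 > 0"
  shows "(\<exists>p. stationary N v eps L1 p) \<and>
         (\<forall>p. stationary N v eps L1 p \<longrightarrow>
            (\<forall>k\<in>{0..N}. p (k, True) + p (k, False) = pi_bar N v eps L1 k))"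
proof -
  let ?w = "wt N v eps L1" and ?r = "rate N v eps L1"
  define Z where "Z = (1 + v) ^ N + L1 * (1 + eps * v) ^ N"
  have "1 + eps * v > 0" using assms by (simp add: add_pos_pos)
  then have Zpos: "Z > 0" using assms unfolding Z_def by (simp add: add_pos_pos)
  have Zs: "(\<Sum>s\<in>states N. ?w s) = Z" unfolding Z_def by (rule Zsum)
  have wpos: "\<And>u. u \<in> states N \<Longrightarrow> ?w u > 0" using wt_pos assms by blast
  have ex: "stationary N v eps L1 (\<lambda>s. ?w s / Z)"
    unfolding stationary_def
  proof (intro conjI ballI)
    fix s assume "s \<in> states N"
    then show "?w s / Z \<ge> 0" using wpos Zpos by (simp add: less_imp_le)
  next
    show "(\<Sum>s\<in>states N. ?w s / Z) = 1" using Zs Zpos by (simp add: sum_divide_distrib[symmetric])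
  next
    fix s assume "s \<in> states N"
    have "(\<Sum>t\<in>states N - {s}. ?w t / Z * ?r t s) = (\<Sum>t\<in>states N - {s}. ?w t * ?r t s) / Z"
      by (simp add: sum_divide_distrib)
    also have "\<dots> = ?w s * (\<Sum>t\<in>states N - {s}. ?r s t) / Z" by (simp add: bal_wt)
    finally show "(\<Sum>t\<in>states N - {s}. ?w t / Z * ?r t s) = ?w s / Z * (\<Sum>t\<in>states N - {s}. ?r s t)"
      by simp
  qed
  have uniq: "p (k, True) + p (k, False) = pi_bar N v eps L1 k"
    if st: "stationary N v eps L1 p" and k: "k \<in> {0..N}" for p k
  proof -
    define h where "h s = p s / ?w s" for s
    define M where "M = Max (h ` states N)"
    have ne: "states N \<noteq> {}" unfolding states_def by auto
    have hmax: "\<forall>u\<in>states N. h u \<le> M" unfolding M_def using states_fin ne by auto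
    obtain s0 where s0: "s0 \<in> states N" "h s0 = M"
    proof -
      have "M \<in> h ` states N" unfolding M_def using Max_in[of "h ` states N"] states_fin[of N] ne by blast
      then show ?thesis using that by blast
    qed
    obtain k0 a0 where s0e: "s0 = (k0, a0)" by (cases s0)
    have all: "\<forall>s\<in>states N. h s = M"
    proof (rule connect[where P = "\<lambda>s. h s = M" and kk = k0 and aa = a0])
      fix k a assume kN: "k \<le> N" and hk: "h (k, a) = M"
      have sk: "(k, a) \<in> states N" using kN unfolding states_def by auto
      have prp: "h t = M" if "t \<in> states N" "t \<noteq> (k, a)" "?r (k, a) t > 0" for t
        using propagate[OF st assms(2-4) sk that] hmax hk unfolding h_def by blast
      have "k < N \<longrightarrow> h (k + 1, a) = M"
      proof
        assume "k < N"
        moreover have "real (N - k) > 0" using \<open>k < N\<close> by simp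
        ultimately show "h (k + 1, a) = M"
          using assms by (intro prp) (auto simp: states_def rate_def)
      qed
      moreover have "0 < k \<longrightarrow> h (k - 1, a) = M"
      proof
        assume "0 < k"
        then show "h (k - 1, a) = M" using kN
          by (intro prp) (auto simp: states_def rate_def)
      qed
      moreover have "h (k, \<not> a) = M"
        using kN assms by (intro prp) (auto simp: states_def rate_def)
      ultimately show "(k < N \<longrightarrow> h (k + 1, a) = M) \<and> (0 < k \<longrightarrow> h (k - 1, a) = M) \<and> h (k, \<not> a) = M"
        by blast
    next
      show "h (k0, a0) = M" using s0 s0e by simp
      show "k0 \<le> N" using s0 s0e unfolding states_def by auto
    qed
    have pe: "\<forall>s\<in>states N. p s = M * ?w s"
    proof
      fix s assume s: "s \<in> states N"
      then have "p s / ?w s = M" "?w s > 0" using all wpos unfolding h_def by auto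
      then show "p s = M * ?w s" by (auto simp: divide_eq_eq)
    qed
    have "1 = (\<Sum>s\<in>states N. p s)" using st unfolding stationary_def by simp
    also have "\<dots> = (\<Sum>s\<in>states N. M * ?w s)" using pe by simp
    also have "\<dots> = M * Z" using Zs by (simp add: sum_distrib_left[symmetric])
    finally have MZ: "M = 1 / Z" using Zpos by (simp add: field_simps)
    have kN: "k \<le> N" using k by simp
    have "p (k, True) + p (k, False) = (?w (k, True) + ?w (k, False)) / Z"
      using pe MZ kN unfolding states_def by (simp add: add_divide_distrib)
    also have "\<dots> = pi_bar N v eps L1 k" unfolding Z_def using marg kN assms by blast
    finally show ?thesis .
  qed
  show ?thesis using ex uniq by blast
qed

end
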